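(* There exist a continuum $K$ and a pairwise disjoint sequence $(f_n)_{n\in\mathbb{N}}$ in $C_1(K)$ such that the extension $K((f_n)_{n\in\mathbb{N}})$ is disconnected.
   Context: All spaces are Hausdorff. A continuum is a metrizable, compact, connected space. For a compact space $K$, $C_1(K)$ denotes the set of continuous functions $K\to[0,1]$; $f,g$ are disjoint if $f\cdot g=0$. For a real function $f$ on $K$, $supp(f)$ is the closure of $\{x\in K: f(x)\neq 0\}$. For a pairwise disjoint sequence $(f_n)_{n\in\mathbb{N}}$ in $C_1(K)$, let $D((f_n)_{n\in\mathbb{N}})$ be the union of all open sets $U\subseteq K$ such that $\{n: U\cap supp(f_n)\neq\emptyset\}$ is finite. The extension of $K$ by $(f_n)_{n\in\mathbb{N}}$, denoted $K((f_n)_{n\in\mathbb{N}})$, is the closure in $K\times[0,1]$ of the graph of the function $\sum_{n\in\mathbb{N}} f_n$ restricted to $D((f_n)_{n\in\mathbb{N}})$. *)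

theory Defs
  imports "HOL-Analysis.Analysis"
begin

definition continuum :: "'a topology \<Rightarrow> bool" where
  "continuum X \<longleftrightarrow> metrizable_space X \<and> Hausdorff_space X \<and> compact_space X
      \<and> connected_space X \<and> topspace X \<noteq> {}"

definition C1 :: "'a topology \<Rightarrow> ('a \<Rightarrow> real) set" where
  "C1 X = {f. continuous_map X euclideanreal f \<and> f ` topspace X \<subseteq> {0..1}}"

definition pairwise_disjoint_seq :: "'a topology \<Rightarrow> (nat \<Rightarrow> 'a \<Rightarrow> real) \<Rightarrow> bool" where
  "pairwise_disjoint_seq X f \<longleftrightarrow>
     (\<forall>n m. n \<noteq> m \<longrightarrow> (\<forall>x\<in>topspace X. f n x * f m x = 0))"

definition supp :: "'a topology \<Rightarrow> ('a \<Rightarrow> real) \<Rightarrow> 'a set" where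
  "supp X g = X closure_of {x \<in> topspace X. g x \<noteq> 0}"

definition Dset :: "'a topology \<Rightarrow> (nat \<Rightarrow> 'a \<Rightarrow> real) \<Rightarrow> 'a set" where
  "Dset X f = \<Union>{U. openin X U \<and> finite {n. U \<inter> supp X (f n) \<noteq> {}}}"

definition extension :: "'a topology \<Rightarrow> (nat \<Rightarrow> 'a \<Rightarrow> real) \<Rightarrow> ('a \<times> real) set" where
  "extension X f = (prod_topology X (top_of_set {0..1})) closure_of
      {(x, \<Sum>n. f n x) | x. x \<in> Dset X f}"

end

theory Submission
  imports Defs
begin

lemma sin_2npi_add: "sin (2*pi*real n + x) = sin x"
proof (induction n)
  case 0 then show ?case by simp
next
  case (Suc n)
  have "2*pi*real (Suc n) + x = (2*pi*real n + x) + 2*pi" by (simp add: algebra_simps)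
  then show ?case using Suc sin_periodic[of "2*pi*real n + x"] by (simp only:)
qed

lemma sin_m1a: "sin (2*pi*real n - pi/2) = -1"
  using sin_2npi_add[of n "-pi/2"] by simp

lemma sin_m1b: "sin (2*pi*real n + 3*pi/2) = -1"
proof -
  have "sin (3*pi/2) = -1"
    using sin_periodic_pi[of "pi/2"] by (simp add: algebra_simps)
  then show ?thesis using sin_2npi_add[of n "3*pi/2"] by simp
qed

definition clamp :: "real \<Rightarrow> real" where "clamp y = max 0 (min 1 y)"
definition FF :: "nat \<Rightarrow> real \<Rightarrow> real" where
  "FF n u = (if 2*pi*real n - pi/2 \<le> u \<and> u \<le> 2*pi*real n + 3*pi/2 then clamp (3 * sin u + 2) else 0)"
definition dl :: "nat \<Rightarrow> real" where "dl n = 1 / (2*pi*real n + 2*pi)"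
definition GG :: "nat \<Rightarrow> real \<Rightarrow> real" where
  "GG n a = (if a \<le> dl n then 0 else FF n (1/a))"

lemma clamp_range: "0 \<le> clamp y" "clamp y \<le> 1" by (auto simp: clamp_def)

lemma dl_pos: "dl n > 0"
proof -
  have "2*pi*real n \<ge> 0" by simp
  then have "2*pi*real n + 2*pi > 0" using pi_gt_zero by linarith
  then show ?thesis unfolding dl_def by simp
qed

lemma cont_clamp: "continuous_on S clamp"
  unfolding clamp_def by (intro continuous_intros)

lemma cont_FF: "continuous_on UNIV (FF n)"
proof -
  let ?a = "2*pi*real n - pi/2" and ?b = "2*pi*real n + 3*pi/2"
  have "continuous_on ({?a..?b} \<union> ({..?a} \<union> {?b..}))
     (\<lambda>u. if u \<in> {?a..?b} then clamp (3 * sin u + 2) else 0)"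
  proof (rule continuous_on_cases)
    show "continuous_on {?a..?b} (\<lambda>u. clamp (3 * sin u + 2))"
      unfolding clamp_def by (intro continuous_intros)
    show "\<forall>x. x \<in> {?a..?b} \<and> \<not> x \<in> {?a..?b} \<or> x \<in> {..?a} \<union> {?b..} \<and> x \<in> {?a..?b} \<longrightarrow>
        clamp (3 * sin x + 2) = 0"
    proof (intro allI impI)
      fix x assume "x \<in> {?a..?b} \<and> \<not> x \<in> {?a..?b} \<or> x \<in> {..?a} \<union> {?b..} \<and> x \<in> {?a..?b}"
      then have "x = ?a \<or> x = ?b" by auto
      then have "sin x = -1" using sin_m1a sin_m1b by auto
      then show "clamp (3 * sin x + 2) = 0" by (simp add: clamp_def)
    qed
  qed (auto)
  moreover have "{?a..?b} \<union> ({..?a} \<union> {?b..}) = UNIV" by auto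
  ultimately show ?thesis unfolding FF_def by (simp add: atLeastAtMost_iff)
qed

lemma FF_zero_high: "u > 2*pi*real n + 3*pi/2 \<Longrightarrow> FF n u = 0"
  unfolding FF_def by auto

lemma cont_GG: "continuous_on UNIV (GG n)"
proof -
  have "continuous_on ({..dl n} \<union> {dl n..}) (\<lambda>a. if a \<le> dl n then 0 else FF n (1/a))"
  proof (rule continuous_on_cases)
    have "continuous_on {dl n..} (\<lambda>a. 1/a)"
      using dl_pos[of n] by (intro continuous_intros) auto
    then show "continuous_on {dl n..} (\<lambda>a. FF n (1/a))"
      using continuous_on_compose2[OF cont_FF, of "{dl n..}" "\<lambda>a. 1/a"] by auto
    show "\<forall>x. x \<in> {..dl n} \<and> \<not> x \<le> dl n \<or> x \<in> {dl n..} \<and> x \<le> dl n \<longrightarrow> 0 = FF n (1 / x)"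
    proof (intro allI impI)
      fix x assume "x \<in> {..dl n} \<and> \<not> x \<le> dl n \<or> x \<in> {dl n..} \<and> x \<le> dl n"
      then have "x = dl n" by auto
      then have "1/x = 2*pi*real n + 2*pi" by (simp add: dl_def)
      then show "0 = FF n (1/x)" using FF_zero_high[of n "1/x"] pi_gt_zero by simp
    qed
  qed auto
  moreover have "{..dl n} \<union> {dl n..} = UNIV" by auto
  ultimately show ?thesis unfolding GG_def[abs_def] by simp
qed


definition hh :: "real \<Rightarrow> real" where "hh a = (sin (1/a) - 1) / 2"
definition pp :: "real \<Rightarrow> real \<times> real" where
  "pp t = (if t \<le> 1 then (0, t) else (t - 1, hh (t - 1)))"
definition AA :: "real set" where "AA = {-1..2}"
definition XX :: "real topology" where "XX = pullback_topology AA pp euclidean"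
definition KK :: "(real \<times> real) set" where "KK = pp ` AA"

definition LL :: "(real \<times> real) set" where "LL = (\<lambda>t. (0, t)) ` {-1..1}"
definition CC :: "(real \<times> real) set" where "CC = (\<lambda>a. (a, hh a)) ` {0<..1}"

lemma topspace_XX: "topspace XX = AA"
  unfolding XX_def by (simp add: topspace_pullback_topology)

lemma hh_range: "-1 \<le> hh a" "hh a \<le> 0" "hh a \<le> 1"
proof -
  have "-1 \<le> sin (1/a)" "sin (1/a) \<le> 1" by simp_all
  then show "-1 \<le> hh a" unfolding hh_def by (simp add: field_simps)
  show "hh a \<le> 0" unfolding hh_def using \<open>sin (1/a) \<le> 1\<close> by (simp add: field_simps)
  then show "hh a \<le> 1" by linarith
qed

lemma KK_eq: "KK = LL \<union> CC"
proof -
  have "AA = {-1..1} \<union> {1<..2}" unfolding AA_def by auto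
  moreover have "pp ` {-1..1} = LL" unfolding LL_def pp_def by (intro image_cong) auto
  moreover have "pp ` {1<..2} = CC"
  proof -
    have "pp ` {1<..2} = (\<lambda>t. (t - 1, hh (t - 1))) ` {1<..2}"
      unfolding pp_def by (intro image_cong) auto
    also have "\<dots> = (\<lambda>a. (a, hh a)) ` ((\<lambda>t. t - 1) ` {1<..2})" by (simp add: image_image)
    also have "(\<lambda>t. t - 1) ` {1<..2} = {0<..(1::real)}"
    proof
      show "(\<lambda>t. t - 1) ` {1<..2} \<subseteq> {0<..(1::real)}" by auto
      show "{0<..(1::real)} \<subseteq> (\<lambda>t. t - 1) ` {1<..2}"
      proof
        fix a :: real assume "a \<in> {0<..1}"
        then show "a \<in> (\<lambda>t. t - 1) ` {1<..2}" by (intro image_eqI[of _ _ "a+1"]) auto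
      qed
    qed
    finally show ?thesis unfolding CC_def .
  qed
  ultimately show ?thesis unfolding KK_def by (metis image_Un)
qed

lemma KK_char: "KK = ({0..1} \<times> {-1..1}) \<inter> - {z. fst z \<noteq> 0 \<and> snd z \<noteq> hh (fst z)}"
  unfolding KK_eq LL_def CC_def using hh_range by (auto simp: image_iff)

lemma cont_hh: "continuous_on {a. a \<noteq> 0} hh"
  unfolding hh_def by (intro continuous_intros) auto

lemma compact_KK: "compact KK"
proof -
  have o: "open {z::real\<times>real. fst z \<noteq> 0 \<and> snd z \<noteq> hh (fst z)}"
  proof -
    have S: "open {z::real\<times>real. fst z \<noteq> 0}"
      by (rule open_Collect_neq) (intro continuous_intros)+
    have "continuous_on {z::real\<times>real. fst z \<noteq> 0} (\<lambda>z. snd z - hh (fst z))"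
      by (intro continuous_intros continuous_on_compose2[OF cont_hh]) auto
    then have "open ({z::real\<times>real. fst z \<noteq> 0} \<inter> (\<lambda>z. snd z - hh (fst z)) -` (- {0}))"
      using S by (intro continuous_open_preimage) auto
    moreover have "{z::real\<times>real. fst z \<noteq> 0} \<inter> (\<lambda>z. snd z - hh (fst z)) -` (- {0}) =
        {z. fst z \<noteq> 0 \<and> snd z \<noteq> hh (fst z)}" by auto
    ultimately show ?thesis by simp
  qed
  show ?thesis unfolding KK_char
    by (intro compact_Int_closed compact_Times compact_Icc) (use o in \<open>simp add: closed_def\<close>)
qed

lemma connected_KK: "connected KK"
proof -
  have cL: "connected LL" unfolding LL_def
    by (intro connected_continuous_image connected_Icc) (intro continuous_intros)
  have cC: "connected CC" unfolding CC_def
  proof (intro connected_continuous_image)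
    show "continuous_on {0<..1} (\<lambda>a. (a, hh a))"
      by (intro continuous_intros continuous_on_compose2[OF cont_hh]) auto
  qed (simp add: is_interval_connected)
  have pt: "(0, -1/2) \<in> closure CC"
  proof -
    define x where "x n = (inverse (real (Suc n)) / pi, -1/2 :: real)" for n
    have "x n \<in> CC" for n
    proof -
      have e: "1 / (inverse (real (Suc n)) / pi) = real (Suc n) * pi" by (simp add: divide_inverse)
      have "sin (1 / (inverse (real (Suc n)) / pi)) = 0" unfolding e by (rule sin_npi)
      then have "hh (inverse (real (Suc n)) / pi) = -1/2" unfolding hh_def by simp
      moreover have "inverse (real (Suc n)) / pi \<in> {0<..1}"
      proof -
        have "inverse (real (Suc n)) \<le> 1" by (simp add: inverse_le_1_iff)
        then have "inverse (real (Suc n)) / pi \<le> 1 / 1"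
          using pi_gt3 by (intro frac_le) auto
        then show ?thesis by simp
      qed
      ultimately show ?thesis unfolding CC_def x_def by (auto simp: image_iff)
    qed
    moreover have "x \<longlonglongrightarrow> (0, -1/2)"
    proof -
      have "(\<lambda>n. inverse (real (Suc n)) / pi) \<longlonglongrightarrow> 0"
        by (intro tendsto_divide_zero LIMSEQ_inverse_real_of_nat)
      then show ?thesis unfolding x_def by (intro tendsto_Pair tendsto_const)
    qed
    ultimately show ?thesis unfolding closure_sequential by blast
  qed
  have "connected (insert (0, -1/2) CC)"
    by (rule connected_intermediate_closure[OF cC]) (use pt closure_subset in auto)
  moreover have "(0, -1/2) \<in> LL" unfolding LL_def by (auto simp: image_iff)
  ultimately have "connected (LL \<union> insert (0, -1/2) CC)"
    using cL by (intro connected_Un) auto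
  moreover have "LL \<union> insert (0, -1/2) CC = KK" unfolding KK_eq using \<open>(0, -1/2) \<in> LL\<close> by auto
  ultimately show ?thesis by simp
qed

lemma inj_pp: "inj_on pp AA"
proof
  fix x y assume "x \<in> AA" "y \<in> AA" "pp x = pp y"
  then show "x = y" unfolding pp_def by (auto split: if_splits)
qed

lemma openin_XX: "openin XX U \<longleftrightarrow> (\<exists>V. open V \<and> U = pp -` V \<inter> AA)"
  unfolding XX_def openin_pullback_topology by simp

lemma homeo_pp: "homeomorphic_map XX (top_of_set KK) pp"
proof (rule bijective_open_imp_homeomorphic_map)
  have "continuous_map XX euclidean (id \<circ> pp)" unfolding XX_def by (intro continuous_map_pullback) simp
  then show "continuous_map XX (top_of_set KK) pp"
    by (intro continuous_map_into_subtopology) (auto simp: topspace_XX KK_def)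
  show "open_map XX (top_of_set KK) pp"
    unfolding open_map_def
  proof (intro allI impI)
    fix U assume "openin XX U"
    then obtain V where V: "open V" "U = pp -` V \<inter> AA" using openin_XX by auto
    then have "pp ` U = KK \<inter> V" unfolding KK_def by auto
    then show "openin (top_of_set KK) (pp ` U)" using V openin_open by auto
  qed
  show "pp ` topspace XX = topspace (top_of_set KK)" by (simp add: topspace_XX KK_def)
  show "inj_on pp (topspace XX)" using inj_pp by (simp add: topspace_XX)
qed

lemma continuum_XX: "continuum XX"
proof -
  have h: "XX homeomorphic_space (top_of_set KK)"
    using homeo_pp homeomorphic_map_imp_homeomorphic_space by blast
  have m: "metrizable_space XX"
    using h homeomorphic_metrizable_space metrizable_space_subtopology metrizable_space_euclidean by blast
  have "compact_space (top_of_set KK)" by (rule compact_space_subtopology) (simp add: compact_KK)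
  then have "compact_space XX" using h homeomorphic_compact_space by blast
  moreover have "connected_space XX" using h homeomorphic_connected_space connected_space_subtopology connected_KK
    by (metis connectedin_iff_connected)
  moreover have "topspace XX \<noteq> {}" by (auto simp: topspace_XX AA_def)
  ultimately show ?thesis unfolding continuum_def using m metrizable_imp_Hausdorff_space by blast
qed


definition ff :: "nat \<Rightarrow> real \<Rightarrow> real" where "ff n t = GG n (fst (pp t))"

lemma FF_range: "0 \<le> FF n u" "FF n u \<le> 1"
  unfolding FF_def using clamp_range by auto
lemma GG_range: "0 \<le> GG n u" "GG n u \<le> 1"
  unfolding GG_def using FF_range by auto

lemma cont_map_pp_comp:
  assumes "continuous_on UNIV g"
  shows "continuous_map XX euclideanreal (\<lambda>t. g (pp t))"
proof -
  have "continuous_map XX euclideanreal (g \<circ> pp)"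
    unfolding XX_def by (intro continuous_map_pullback) (simp add: assms)
  then show ?thesis by (simp add: o_def)
qed

lemma ff_C1: "ff n \<in> C1 XX"
proof -
  have "continuous_on UNIV (\<lambda>z::real\<times>real. GG n (fst z))"
    by (intro continuous_on_compose2[OF cont_GG] continuous_intros) auto
  then have "continuous_map XX euclideanreal (ff n)"
    unfolding ff_def[abs_def] by (rule cont_map_pp_comp)
  then show ?thesis unfolding C1_def using GG_range by (auto simp: ff_def)
qed

lemma two_periods:
  assumes "n \<noteq> m" "2*pi*real n - pi/2 \<le> u" "u \<le> 2*pi*real n + 3*pi/2"
    "2*pi*real m - pi/2 \<le> u" "u \<le> 2*pi*real m + 3*pi/2"
  shows "sin u = -1"
proof -
  have key: "sin u = -1" if "n < m" "2*pi*real n - pi/2 \<le> u" "u \<le> 2*pi*real n + 3*pi/2"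
    "2*pi*real m - pi/2 \<le> u" "u \<le> 2*pi*real m + 3*pi/2" for n m
  proof -
    have "real m \<ge> real n + 1" using that(1) by linarith
    then have "2*pi*real m \<ge> 2*pi*(real n + 1)" using pi_gt_zero by (intro mult_left_mono) auto
    then have "u = 2*pi*real m - pi/2" using that by (simp add: algebra_simps)
    then show ?thesis using sin_m1a by simp
  qed
  show ?thesis
  proof (cases "n < m")
    case True then show ?thesis using key assms by blast
  next
    case False then have "m < n" using assms(1) by simp
    then show ?thesis using key assms by blast
  qed
qed

lemma GG_nonzero:
  assumes "GG n a \<noteq> 0"
  shows "a > 0" "2*pi*real n - pi/2 \<le> 1/a" "1/a \<le> 2*pi*real n + 3*pi/2"
    "GG n a = clamp (3 * sin (1/a) + 2)"
proof -
  have "a > dl n" using assms unfolding GG_def by (auto split: if_splits)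
  then show "a > 0" using dl_pos[of n] by linarith
  show "2*pi*real n - pi/2 \<le> 1/a" "1/a \<le> 2*pi*real n + 3*pi/2"
    "GG n a = clamp (3 * sin (1/a) + 2)"
    using assms \<open>a > dl n\<close> unfolding GG_def FF_def by (auto split: if_splits)
qed

lemma clamp_m1: "clamp (3 * (-1) + 2) = 0" by (simp add: clamp_def)

lemma GG_disj: "n \<noteq> m \<Longrightarrow> GG n a * GG m a = 0"
proof (rule ccontr)
  assume nm: "n \<noteq> m" and "GG n a * GG m a \<noteq> 0"
  then have a: "GG n a \<noteq> 0" "GG m a \<noteq> 0" by auto
  have "sin (1/a) = -1"
    using two_periods[OF nm] GG_nonzero[OF a(1)] GG_nonzero[OF a(2)] by blast
  then show False using a GG_nonzero(4)[OF a(1)] clamp_m1 by simp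
qed

lemma ff_disj: "pairwise_disjoint_seq XX ff"
  unfolding pairwise_disjoint_seq_def ff_def using GG_disj by blast

lemma period_exists:
  assumes "u \<ge> 1"
  shows "\<exists>N. 2*pi*real N - pi/2 \<le> u \<and> u < 2*pi*real N + 3*pi/2"
proof -
  define k where "k = \<lfloor>(u + pi/2) / (2*pi)\<rfloor>"
  have k1: "of_int k \<le> (u + pi/2) / (2*pi)" and k2: "(u + pi/2) / (2*pi) < of_int k + 1"
    unfolding k_def by linarith+
  have "(u + pi/2) / (2*pi) \<ge> 0" using assms pi_gt_zero by (intro divide_nonneg_pos) auto
  then have "k \<ge> 0" using k2 by linarith
  have p: "2*pi > 0" using pi_gt_zero by simp
  have "2*pi * of_int k \<le> u + pi/2" using k1 p by (simp add: field_simps)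
  moreover have "u + pi/2 < 2*pi * (of_int k + 1)" using k2 p by (simp add: field_simps)
  moreover have "real (nat k) = of_int k" using \<open>k \<ge> 0\<close> by simp
  ultimately show ?thesis by (intro exI[of _ "nat k"]) (simp add: algebra_simps)
qed

lemma sum_ff:
  assumes "t \<in> AA"
  shows "(\<Sum>n. ff n t) = (if t \<le> 1 then 0 else clamp (3 * sin (1/(t-1)) + 2))"
proof (cases "t \<le> 1")
  case True
  then have "ff n t = 0" for n unfolding ff_def pp_def GG_def using dl_pos[of n] by simp
  then show ?thesis using True by simp
next
  case False
  define a where "a = t - 1"
  have a: "0 < a" "a \<le> 1" using False assms unfolding a_def AA_def by auto
  then have u1: "1/a \<ge> 1" by simp
  obtain N where N: "2*pi*real N - pi/2 \<le> 1/a" "1/a < 2*pi*real N + 3*pi/2"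
    using period_exists[OF u1] by blast
  have ffa: "ff n t = GG n a" for n using False unfolding ff_def pp_def a_def by simp
  have "a > dl N"
  proof -
    have "1/a < 2*pi*real N + 2*pi" using N(2) pi_gt_zero by linarith
    moreover have "2*pi*real N \<ge> 0" by simp
    ultimately have "1/a < 2*pi*real N + 2*pi" "2*pi*real N + 2*pi > 0" using pi_gt_zero by linarith+
    then have "1 / (2*pi*real N + 2*pi) < 1 / (1/a)"
      using a by (intro divide_strict_left_mono) auto
    then show ?thesis unfolding dl_def using a by simp
  qed
  then have GN: "GG N a = clamp (3 * sin (1/a) + 2)" unfolding GG_def FF_def using N by auto
  have others: "GG m a = 0" if "m \<noteq> N" for m
  proof (rule ccontr)
    assume nz: "GG m a \<noteq> 0"
    have "sin (1/a) = -1" using two_periods[OF that] GG_nonzero[OF nz] N by auto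
    then show False using nz GG_nonzero(4)[OF nz] clamp_m1 by simp
  qed
  have "(\<lambda>m. ff m t) = (\<lambda>m. if m = N then GG N a else 0)" using others ffa by auto
  then have "(\<lambda>m. ff m t) sums GG N a" using sums_single[of N "\<lambda>_. GG N a"] by simp
  then show ?thesis using False GN a_def by (simp add: sums_iff)
qed


definition SB :: "real set" where "SB = {t \<in> AA. snd (pp t) \<in> {-5/6..0}}"

lemma closedin_SB: "closedin XX SB"
proof -
  have "continuous_map XX euclideanreal (\<lambda>t. snd (pp t))"
    by (rule cont_map_pp_comp) (intro continuous_intros)
  then have "closedin XX {t \<in> topspace XX. snd (pp t) \<in> {-5/6..0}}"
    by (rule closedin_continuous_map_preimage) (rule closed_closedin[THEN iffD1, OF closed_atLeastAtMost])
  then show ?thesis unfolding SB_def topspace_XX .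
qed

lemma clamp_pos: "clamp y \<noteq> 0 \<Longrightarrow> y > 0"
proof (rule ccontr)
  assume "clamp y \<noteq> 0" "\<not> y > 0"
  then have "min 1 y \<le> 0" by linarith
  then have "clamp y = 0" unfolding clamp_def by linarith
  then show False using \<open>clamp y \<noteq> 0\<close> by simp
qed

lemma ff_nonzero_SB: assumes "t \<in> AA" "ff n t \<noteq> 0" shows "t \<in> SB"
proof -
  have t1: "\<not> t \<le> 1"
  proof
    assume "t \<le> 1"
    then have "ff n t = GG n 0" unfolding ff_def pp_def by simp
    then show False using assms(2) dl_pos[of n] unfolding GG_def by simp
  qed
  then have e: "ff n t = GG n (t - 1)" "snd (pp t) = hh (t - 1)" unfolding ff_def pp_def by auto
  then have nz: "GG n (t - 1) \<noteq> 0" using assms by simp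
  then have "clamp (3 * sin (1 / (t - 1)) + 2) \<noteq> 0" using GG_nonzero(4)[OF nz] by simp
  then have "3 * sin (1 / (t - 1)) + 2 > 0" by (rule clamp_pos)
  then have "hh (t - 1) \<ge> -5/6" unfolding hh_def by (simp add: field_simps)
  then show ?thesis unfolding SB_def using assms(1) e(2) hh_range(2)[of "t - 1"] by simp
qed

lemma supp_SB: "supp XX (ff n) \<subseteq> SB"
proof -
  have "{x \<in> topspace XX. ff n x \<noteq> 0} \<subseteq> SB" using ff_nonzero_SB topspace_XX by blast
  then show ?thesis unfolding supp_def by (rule closure_of_minimal[OF _ closedin_SB])
qed

lemma in_Dset:
  assumes "openin XX U" "t \<in> U" "U \<inter> SB = {}"
  shows "t \<in> Dset XX ff"
proof -
  have "U \<inter> supp XX (ff n) = {}" for n using supp_SB[of n] assms(3) by auto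
  then have "{n. U \<inter> supp XX (ff n) \<noteq> {}} = {}" by simp
  then have "U \<in> {U. openin XX U \<and> finite {n. U \<inter> supp XX (ff n) \<noteq> {}}}" using assms(1) by simp
  then show ?thesis unfolding Dset_def using assms(2) by (rule UnionI)
qed


lemma one_in_D: "1 \<in> Dset XX ff"
proof (rule in_Dset)
  let ?U = "pp -` {z. snd z > 1/2} \<inter> AA"
  have "open {z::real\<times>real. snd z > 1/2}"
    by (rule open_Collect_less) (intro continuous_intros)+
  then show "openin XX ?U" unfolding openin_XX by blast
  show "1 \<in> ?U" by (simp add: pp_def AA_def)
  show "?U \<inter> SB = {}" unfolding SB_def by auto
qed

lemma m1_in_D: "-1 \<in> Dset XX ff"
proof (rule in_Dset)
  let ?U = "pp -` {z. snd z < -9/10} \<inter> AA"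
  have "open {z::real\<times>real. snd z < -9/10}"
    by (rule open_Collect_less) (intro continuous_intros)+
  then show "openin XX ?U" unfolding openin_XX by blast
  show "-1 \<in> ?U" by (simp add: pp_def AA_def)
  show "?U \<inter> SB = {}" unfolding SB_def by auto
qed

lemma Dset_sub: "Dset XX ff \<subseteq> AA"
  unfolding Dset_def using openin_subset topspace_XX by blast

lemma bad:
  assumes t: "-2/3 < t" "t < -1/2"
  shows "t \<notin> Dset XX ff"
proof
  assume "t \<in> Dset XX ff"
  then obtain U where U: "openin XX U" "finite {n. U \<inter> supp XX (ff n) \<noteq> {}}" "t \<in> U"
    unfolding Dset_def by blast
  then obtain V where V: "open V" "U = pp -` V \<inter> AA" using openin_XX by blast
  have "pp t = (0, t)" using t by (simp add: pp_def)
  then have "(0, t) \<in> V" using U(3) V by auto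
  then obtain e where e: "e > 0" "ball (0, t) e \<subseteq> V" using V(1) open_contains_ball by blast
  define y where "y = 2*t + 1"
  have y: "-1 \<le> y" "y \<le> 1" "-1/3 < y" using t unfolding y_def by auto
  have ab: "-(pi/2) \<le> arcsin y" "arcsin y \<le> pi/2" using arcsin_bounded[OF y(1,2)] by auto
  define N where "N = nat \<lceil>1/e\<rceil> + 1"
  have "{n. N \<le> n} \<subseteq> {n. U \<inter> supp XX (ff n) \<noteq> {}}"
  proof
    fix n assume "n \<in> {n. N \<le> n}"
    then have nN: "N \<le> n" by simp
    then have n1: "n \<ge> 1" unfolding N_def by simp
    have ne: "real n > 1/e"
    proof -
      have "real n \<ge> real N" using nN by simp
      moreover have "real N = real (nat \<lceil>1/e\<rceil>) + 1" unfolding N_def by simp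
      moreover have "real (nat \<lceil>1/e\<rceil>) \<ge> 1/e" by linarith
      ultimately show ?thesis by linarith
    qed
    define u where "u = 2*pi*real n + arcsin y"
    have "2*pi*real n - pi/2 \<ge> real n"
    proof -
      have "(2*pi - 1) * real n \<ge> (2*pi - 1) * 1" using n1 pi_gt3 by (intro mult_left_mono) auto
      then show ?thesis using pi_gt3 by (simp add: algebra_simps)
    qed
    then have un: "u \<ge> real n" unfolding u_def using ab by linarith
    have u1: "u \<ge> 1" using un n1 by linarith
    have upos: "u > 0" using u1 by linarith
    have "1/u < e"
    proof -
      have "1/u \<le> 1/real n" using un n1 by (intro divide_left_mono) auto
      also have "1/real n < e" using ne e(1) n1 by (simp add: field_simps)
      finally show ?thesis .
    qed
    define s where "s = 1 + 1/u"
    have s1: "\<not> s \<le> 1" unfolding s_def using upos by simp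
    have sA: "s \<in> AA" unfolding s_def AA_def using u1 upos by (simp add: field_simps)
    have sinu: "sin u = y" unfolding u_def using sin_2npi_add y by simp
    have pps: "pp s = (1/u, t)" using s1 unfolding pp_def s_def hh_def
      using sinu y_def by simp
    have "pp s \<in> ball (0, t) e" unfolding pps using \<open>1/u < e\<close> upos by (simp add: dist_Pair_Pair dist_real_def)
    then have sU: "s \<in> U" using e(2) V(2) sA by auto
    have "1/u > dl n"
    proof -
      have "u < 2*pi*real n + 2*pi" unfolding u_def using ab pi_gt_zero by linarith
      moreover have "2*pi*real n \<ge> 0" by simp
      ultimately have "1 / (2*pi*real n + 2*pi) < 1/u" using upos by (intro divide_strict_left_mono) auto
      then show ?thesis unfolding dl_def .
    qed
    moreover have "2*pi*real n - pi/2 \<le> u" "u \<le> 2*pi*real n + 3*pi/2"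
      unfolding u_def using ab pi_gt_zero by linarith+
    ultimately have "GG n (1/u) = clamp (3 * y + 2)" unfolding GG_def FF_def using sinu upos by simp
    also have "\<dots> = 1" using y unfolding clamp_def by simp
    finally have "ff n s = 1" using s1 unfolding ff_def pp_def s_def by simp
    then have "s \<in> supp XX (ff n)" unfolding supp_def
      using closure_of_subset_Int[of XX "{x \<in> topspace XX. ff n x \<noteq> 0}"] sA topspace_XX by auto
    then show "n \<in> {n. U \<inter> supp XX (ff n) \<noteq> {}}" using sU by auto
  qed
  moreover have "infinite {n::nat. N \<le> n}" by (simp add: infinite_Ici atLeast_def[symmetric])
  ultimately show False using U(2) finite_subset by blast
qed



theorem theorem4p1:
  "\<exists>(X :: real topology) (f :: nat \<Rightarrow> real \<Rightarrow> real).
     continuum X \<and> (\<forall>n. f n \<in> C1 X) \<and> pairwise_disjoint_seq X f \<and>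
     \<not> connectedin (prod_topology X (top_of_set {0..1})) (extension X f)"
proof (intro exI conjI allI)
  show "continuum XX" by (rule continuum_XX)
  show "ff n \<in> C1 XX" for n by (rule ff_C1)
  show "pairwise_disjoint_seq XX ff" by (rule ff_disj)
  let ?Y = "prod_topology XX (top_of_set {0..1::real})"
  define \<phi> where "\<phi> z = max (snd z) (clamp (-6 * snd (pp (fst z)) - 3))" for z :: "real \<times> real"
  define G where "G = {(x, \<Sum>n. ff n x) | x. x \<in> Dset XX ff}"
  have E: "extension XX ff = ?Y closure_of G" unfolding extension_def G_def by simp
  have c1: "continuous_map ?Y euclideanreal snd"
  proof -
    have "continuous_map ?Y (top_of_set {0..1}) snd" by (rule continuous_map_snd)
    then show ?thesis by (simp add: continuous_map_in_subtopology)
  qed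
  have c2: "continuous_map ?Y euclideanreal (\<lambda>z. clamp (-6 * snd (pp (fst z)) - 3))"
  proof -
    have "continuous_on UNIV (\<lambda>w::real\<times>real. clamp (-6 * snd w - 3))"
      unfolding clamp_def by (intro continuous_intros)
    then have "continuous_map XX euclideanreal (\<lambda>t. clamp (-6 * snd (pp t) - 3))"
      by (rule cont_map_pp_comp)
    then have "continuous_map ?Y euclideanreal ((\<lambda>t. clamp (-6 * snd (pp t) - 3)) \<circ> fst)"
      by (intro continuous_map_compose[OF continuous_map_fst])
    then show ?thesis by (simp add: o_def)
  qed
  have c\<phi>: "continuous_map ?Y euclideanreal \<phi>"
    unfolding \<phi>_def[abs_def] using c1 c2 by (rule continuous_map_real_max)
  define F where "F = {z \<in> topspace ?Y. \<phi> z \<in> {0,1}}"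
  have Fc: "closedin ?Y F" unfolding F_def
    by (rule closedin_continuous_map_preimage[OF c\<phi>]) (rule closed_closedin[THEN iffD1], simp)
  have GF: "G \<subseteq> F"
  proof
    fix z assume "z \<in> G"
    then obtain x where z: "z = (x, \<Sum>n. ff n x)" and xD: "x \<in> Dset XX ff" unfolding G_def by blast
    have xA: "x \<in> AA" using xD Dset_sub by blast
    show "z \<in> F"
    proof (cases "x \<le> 1")
      case True
      have v: "(\<Sum>n. ff n x) = 0" using sum_ff[OF xA] True by simp
      have ppx: "snd (pp x) = x" using True by (simp add: pp_def)
      have "\<not> (-2/3 < x \<and> x < -1/2)" using bad xD by blast
      then have "\<phi> z \<in> {0,1}"
      proof (cases "x \<ge> -1/2")
        case True
        then have "clamp (-6 * x - 3) = 0" unfolding clamp_def by simp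
        then show ?thesis unfolding \<phi>_def z using v ppx by simp
      next
        case False
        then have "x \<le> -2/3" using \<open>\<not> (-2/3 < x \<and> x < -1/2)\<close> by linarith
        then have "clamp (-6 * x - 3) = 1" unfolding clamp_def by simp
        then show ?thesis unfolding \<phi>_def z using v ppx by simp
      qed
      then show ?thesis unfolding F_def z using xA v topspace_XX by simp
    next
      case False
      define s where "s = sin (1/(x-1))"
      have v: "(\<Sum>n. ff n x) = clamp (3 * s + 2)" using sum_ff[OF xA] False s_def by simp
      have ppx: "snd (pp x) = (s - 1)/2" using False by (simp add: pp_def hh_def s_def)
      have "-6 * ((s - 1)/2) - 3 = - 3 * s" by (simp add: field_simps)
      then have cl: "clamp (-6 * snd (pp x) - 3) = clamp (- 3 * s)" unfolding ppx by simp
      have "\<phi> z = 1"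
      proof (cases "s \<le> -1/3")
        case True
        then have "clamp (- 3 * s) = 1" unfolding clamp_def by simp
        then show ?thesis unfolding \<phi>_def z using cl v clamp_range[of "3 * s + 2"] by simp
      next
        case False
        then have "clamp (3 * s + 2) = 1" unfolding clamp_def by simp
        then show ?thesis unfolding \<phi>_def z using cl v clamp_range[of "- 3 * s"] by simp
      qed
      then show ?thesis unfolding F_def z using xA v topspace_XX clamp_range[of "3 * s + 2"] by simp
    qed
  qed
  have EF: "extension XX ff \<subseteq> F" unfolding E by (rule closure_of_minimal[OF GF Fc])
  have z0: "(1, 0) \<in> extension XX ff"
  proof -
    have "(1::real, 0::real) \<in> G" unfolding G_def using one_in_D sum_ff[of 1] by (auto simp: AA_def)
    moreover have "(1::real, 0::real) \<in> topspace ?Y" by (simp add: topspace_XX AA_def)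
    ultimately show ?thesis unfolding E using closure_of_subset_Int[of ?Y G] by blast
  qed
  have z1: "(-1, 0) \<in> extension XX ff"
  proof -
    have "(-1::real, 0::real) \<in> G" unfolding G_def using m1_in_D sum_ff[of "-1"] by (auto simp: AA_def)
    moreover have "(-1::real, 0::real) \<in> topspace ?Y" by (simp add: topspace_XX AA_def)
    ultimately show ?thesis unfolding E using closure_of_subset_Int[of ?Y G] by blast
  qed
  show "\<not> connectedin ?Y (extension XX ff)"
  proof
    assume "connectedin ?Y (extension XX ff)"
    then have "connectedin euclideanreal (\<phi> ` extension XX ff)"
      by (rule connectedin_continuous_map_image[OF c\<phi>])
    then have con: "connected (\<phi> ` extension XX ff)" by simp
    have a: "\<phi> (1, 0) = 0" unfolding \<phi>_def clamp_def by (simp add: pp_def)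
    have b: "\<phi> (-1, 0) = 1" unfolding \<phi>_def clamp_def by (simp add: pp_def)
    have "{0..1} \<subseteq> \<phi> ` extension XX ff"
      by (rule connected_contains_Icc[OF con]) (use z0 z1 a b in \<open>force+\<close>)
    then have "1/2 \<in> \<phi> ` extension XX ff" by auto
    then show False using EF unfolding F_def by auto
  qed
qed

end
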